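(* Let $f\in C^2([0,\infty))$ satisfy $f(u)>0$ and $f'(u)>0$ for all $u>0$, and assume $f$ is log-concave, i.e. \[ f''(u)f(u)-f'(u)^2<0\quad\text{for all } u>0 . \] Let $u(r)$ be a positive solution of \[ u''+\frac{1}{r}u'+f(u)=0,\quad 0<r<1,\qquad u'(0)=u(1)=0 . \] Then any non-trivial solution $w(r)$ of the linearized problem \[ w''+\frac{1}{r}w'+f'(u(r))w=0,\quad 0<r<1,\qquad w'(0)=w(1)=0 \] does not vanish on $[0,1)$; i.e., replacing $w$ by $-w$ if necessary, $w(r)>0$ on $[0,1)$.
   Context: This is the radial form of the problem $\Delta u+f(u)=0$ on the unit disk in $\mathbb{R}^2$ with zero Dirichlet boundary data. *)

theory Defs
  imports "HOL-Analysis.Analysis"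
begin

end

theory Submission
  imports Defs
begin

locale fu =
  fixes f f1 f2 u u1 u2 :: "real \<Rightarrow> real"
  assumes f_d1: "\<And>x. x \<ge> 0 \<Longrightarrow> (f has_real_derivative f1 x) (at x within {0..})"
    and f_d2: "\<And>x. x \<ge> 0 \<Longrightarrow> (f1 has_real_derivative f2 x) (at x within {0..})"
    and f_pos: "\<And>x. x > 0 \<Longrightarrow> f x > 0"
    and f1_pos: "\<And>x. x > 0 \<Longrightarrow> f1 x > 0"
    and f_logconc: "\<And>x. x > 0 \<Longrightarrow> f2 x * f x - (f1 x)\<^sup>2 < 0"
    and u_d1: "\<And>r. r \<in> {0..1} \<Longrightarrow> (u has_real_derivative u1 r) (at r within {0..1})"
    and u_d2: "\<And>r. r \<in> {0..1} \<Longrightarrow> (u1 has_real_derivative u2 r) (at r within {0..1})"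
    and u_eq: "\<And>r. r \<in> {0<..<1} \<Longrightarrow> u2 r + u1 r / r + f (u r) = 0"
    and u_bc0: "u1 0 = 0" and u_bc1: "u 1 = 0"
    and u_pos: "\<And>r. r \<in> {0..<1} \<Longrightarrow> u r > 0"
begin

lemma f_at: "x > 0 \<Longrightarrow> (f has_real_derivative f1 x) (at x)"
  using f_d1[of x] at_within_interior[of x "{0..}"] by simp

lemma f1_at: "x > 0 \<Longrightarrow> (f1 has_real_derivative f2 x) (at x)"
  using f_d2[of x] at_within_interior[of x "{0..}"] by simp

lemma f_cont: "continuous_on {0..} f"
  by (rule DERIV_continuous_on[OF f_d1]) simp

lemma f1_cont: "continuous_on {0..} f1"
  by (rule DERIV_continuous_on[OF f_d2]) simp

lemma u_at: "r \<in> {0<..<1} \<Longrightarrow> (u has_real_derivative u1 r) (at r)"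
  using u_d1[of r] at_within_Icc_at[of 0 r 1] by simp

lemma u1_at: "r \<in> {0<..<1} \<Longrightarrow> (u1 has_real_derivative u2 r) (at r)"
  using u_d2[of r] at_within_Icc_at[of 0 r 1] by simp

lemma u_cont: "continuous_on {0..1} u"
  by (rule DERIV_continuous_on[OF u_d1])

lemma u1_cont: "continuous_on {0..1} u1"
  by (rule DERIV_continuous_on[OF u_d2])

lemma u_nonneg: "r \<in> {0..1} \<Longrightarrow> u r \<ge> 0"
  using u_pos[of r] u_bc1 by (cases "r = 1") auto

lemma fu_cont: "continuous_on {0..1} (\<lambda>r. f (u r))"
  by (rule continuous_on_compose2[OF f_cont u_cont]) (auto dest: u_nonneg)

lemma f1u_cont: "continuous_on {0..1} (\<lambda>r. f1 (u r))"
  by (rule continuous_on_compose2[OF f1_cont u_cont]) (auto dest: u_nonneg)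

lemma fu_at: "r \<in> {0<..<1} \<Longrightarrow> ((\<lambda>r. f (u r)) has_real_derivative f1 (u r) * u1 r) (at r)"
  by (rule DERIV_chain2[OF f_at u_at]) (auto intro: u_pos)

lemma u2_eq: "r \<in> {0<..<1} \<Longrightarrow> u2 r = - u1 r / r - f (u r)"
  using u_eq[of r] by linarith

lemma T_at: "r \<in> {0<..<1} \<Longrightarrow> ((\<lambda>r. r * u1 r) has_real_derivative - (r * f (u r))) (at r)"
proof -
  assume r: "r \<in> {0<..<1}"
  have "((\<lambda>r. r * u1 r) has_real_derivative (r * u2 r + 1 * u1 r)) (at r)"
    by (rule DERIV_mult'[OF DERIV_ident u1_at[OF r]])
  moreover have "r * u2 r + 1 * u1 r = - (r * f (u r))"
    using r by (simp add: u2_eq field_simps)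
  ultimately show ?thesis by simp
qed

lemma T_cont: "continuous_on {0..1} (\<lambda>r. r * u1 r)"
  by (intro continuous_intros u1_cont)

lemma T_dec: "0 \<le> a \<Longrightarrow> a < b \<Longrightarrow> b \<le> 1 \<Longrightarrow> b * u1 b < a * u1 a"
proof (rule DERIV_neg_imp_decreasing_open[where f="\<lambda>r. r * u1 r"])
  fix x assume "0 \<le> a" "a < x" "x < b" "b \<le> 1"
  then show "\<exists>y. ((\<lambda>r. r * u1 r) has_real_derivative y) (at x) \<and> y < 0"
    by (intro exI[where x="- (x * f (u x))"] conjI T_at) (auto simp: f_pos u_pos)
next
  assume "0 \<le> a" "b \<le> 1" then show "continuous_on {a..b} (\<lambda>r. r * u1 r)"
    by (rule_tac continuous_on_subset[OF T_cont]) auto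
qed

lemma u1_neg: "0 < r \<Longrightarrow> r \<le> 1 \<Longrightarrow> u1 r < 0"
  using T_dec[of 0 r] u_bc0 by (simp add: mult_less_0_iff)

lemma u_dec: "0 \<le> a \<Longrightarrow> a < b \<Longrightarrow> b \<le> 1 \<Longrightarrow> u b < u a"
proof (rule DERIV_neg_imp_decreasing_open[where f="u"])
  fix x assume "0 \<le> a" "a < x" "x < b" "b \<le> 1"
  then show "\<exists>y. (u has_real_derivative y) (at x) \<and> y < 0"
    by (intro exI[where x="u1 x"] conjI u_at) (auto simp: u1_neg)
next
  assume "0 \<le> a" "b \<le> 1" then show "continuous_on {a..b} u"
    by (rule_tac continuous_on_subset[OF u_cont]) auto
qed

lemma g_inc: "0 < x \<Longrightarrow> x < y \<Longrightarrow> f x / f1 x < f y / f1 y"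
proof (rule DERIV_pos_imp_increasing_open[where f="\<lambda>z. f z / f1 z"])
  fix z assume "0 < x" "x < z" "z < y"
  then have z: "z > 0" by simp
  have "((\<lambda>z. f z / f1 z) has_real_derivative (f1 z * f1 z - f z * f2 z) / (f1 z * f1 z)) (at z)"
    using z f1_pos[OF z] by (intro DERIV_divide f_at f1_at) auto
  moreover have "(f1 z * f1 z - f z * f2 z) / (f1 z * f1 z) > 0"
    using f1_pos[OF z] f_logconc[OF z] by (simp add: power2_eq_square algebra_simps)
  ultimately show "\<exists>y. ((\<lambda>z. f z / f1 z) has_real_derivative y) (at z) \<and> y > 0" by blast
next
  assume "0 < x" "x < y"
  then show "continuous_on {x..y} (\<lambda>z. f z / f1 z)"
  proof (intro continuous_on_divide continuous_on_subset[OF f_cont] continuous_on_subset[OF f1_cont] ballI)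
    fix z assume "z \<in> {x..y}" then have "z > 0" using \<open>0 < x\<close> by simp
    then show "f1 z \<noteq> 0" using f1_pos[of z] by simp
  qed (use \<open>0 < x\<close> in auto)
qed

end

locale fuw = fu +
  fixes w w1 w2 :: "real \<Rightarrow> real"
  assumes w_d1: "\<And>r. r \<in> {0..1} \<Longrightarrow> (w has_real_derivative w1 r) (at r within {0..1})"
    and w_d2: "\<And>r. r \<in> {0..1} \<Longrightarrow> (w1 has_real_derivative w2 r) (at r within {0..1})"
    and w_eq: "\<And>r. r \<in> {0<..<1} \<Longrightarrow> w2 r + w1 r / r + f1 (u r) * w r = 0"
begin

lemma w_at: "r \<in> {0<..<1} \<Longrightarrow> (w has_real_derivative w1 r) (at r)"
  using w_d1[of r] at_within_Icc_at[of 0 r 1] by simp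

lemma w1_at: "r \<in> {0<..<1} \<Longrightarrow> (w1 has_real_derivative w2 r) (at r)"
  using w_d2[of r] at_within_Icc_at[of 0 r 1] by simp

lemma w_cont: "continuous_on {0..1} w"
  by (rule DERIV_continuous_on[OF w_d1])

lemma w1_cont: "continuous_on {0..1} w1"
  by (rule DERIV_continuous_on[OF w_d2])

lemma w2_eq: "r \<in> {0<..<1} \<Longrightarrow> w2 r = - w1 r / r - f1 (u r) * w r"
  using w_eq[of r] by linarith

lemma neg: "fuw f f1 f2 u u1 u2 (\<lambda>r. - w r) (\<lambda>r. - w1 r) (\<lambda>r. - w2 r)"
proof (intro fuw.intro fu_axioms fuw_axioms.intro)
  fix r :: real assume r: "r \<in> {0..1}"
  show "((\<lambda>r. - w r) has_real_derivative - w1 r) (at r within {0..1})"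
    by (rule DERIV_minus[OF w_d1[OF r]])
  show "((\<lambda>r. - w1 r) has_real_derivative - w2 r) (at r within {0..1})"
    by (rule DERIV_minus[OF w_d2[OF r]])
next
  fix r :: real assume r: "r \<in> {0<..<1}"
  show "- w2 r + - w1 r / r + f1 (u r) * - w r = 0"
  proof -
    have "- w1 r / r = - (w1 r / r)" by simp
    then show ?thesis using w_eq[OF r] by linarith
  qed
qed

lemma energy:
  assumes w0: "w 0 = 0" and w10: "w1 0 = 0" and r: "r \<in> {0..1}"
  shows "w r = 0"
proof -
  have "bounded ((\<lambda>r. f1 (u r)) ` {0..1})"
    by (intro compact_imp_bounded compact_continuous_image f1u_cont compact_Icc)
  then obtain K where K0: "\<forall>x\<in>{0..1}. \<bar>f1 (u x)\<bar> \<le> K"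
    unfolding bounded_iff by auto
  then have K: "\<And>r. r \<in> {0..1} \<Longrightarrow> \<bar>f1 (u r)\<bar> \<le> K" by blast
  define C where "C = 1 + \<bar>K\<bar>"
  define G where "G = (\<lambda>r. ((w r)\<^sup>2 + (w1 r)\<^sup>2) * exp (- (C * r)))"
  have Gc: "continuous_on {0..1} G"
    unfolding G_def by (intro continuous_intros w_cont w1_cont)
  have G0: "G 0 = 0" by (simp add: G_def w0 w10)
  have Gnn: "G s \<ge> 0" for s by (simp add: G_def)
  have Gd: "\<exists>y. (G has_real_derivative y) (at s) \<and> y \<le> 0" if s: "s \<in> {0<..<1}" for s
  proof -
    let ?A = "w s" and ?B = "w1 s" and ?F = "f1 (u s)" and ?E = "exp (- (C * s))"
    have d: "(G has_real_derivative
       ((2 * ?A * w1 s + 2 * ?B * w2 s) * ?E + ((?A)\<^sup>2 + (?B)\<^sup>2) * (?E * (- C)))) (at s)"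
      unfolding G_def
      by (auto intro!: derivative_eq_intros w_at w1_at s simp: power2_eq_square algebra_simps)
    have sp: "s > 0" using s by simp
    have "2 * ?B * w2 s = - 2 * ?B\<^sup>2 / s - 2 * ?F * ?A * ?B"
    proof -
      have e: "s * w2 s = - w1 s - s * (f1 (u s) * w s)" using w2_eq[OF s] sp by (simp add: field_simps)
      have "2 * ?B * w2 s = (2 * ?B / s) * (s * w2 s)" using sp by simp
      also have "\<dots> = (2 * ?B / s) * (- w1 s - s * (f1 (u s) * w s))" by (simp only: e)
      also have "\<dots> = - 2 * ?B\<^sup>2 / s - 2 * ?F * ?A * ?B" using sp by (simp add: field_simps power2_eq_square)
      finally show ?thesis .
    qed
    moreover have "?B\<^sup>2 / s \<ge> 0" using sp by simp
    moreover have "2 * ?A * ?B * (1 - ?F) \<le> C * (?A\<^sup>2 + ?B\<^sup>2)"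
    proof -
      have "\<bar>?F\<bar> \<le> \<bar>K\<bar>" using K[of s] s by auto
      have "2 * ?A * ?B * (1 - ?F) \<le> \<bar>2 * ?A * ?B\<bar> * \<bar>1 - ?F\<bar>"
        by (metis abs_ge_self abs_mult)
      also have "\<dots> \<le> (?A\<^sup>2 + ?B\<^sup>2) * C"
      proof (rule mult_mono)
        show "\<bar>2 * ?A * ?B\<bar> \<le> ?A\<^sup>2 + ?B\<^sup>2"
        proof -
          have h: "0 \<le> (\<bar>?A\<bar> - \<bar>?B\<bar>)\<^sup>2" by simp
          have "\<bar>2 * ?A * ?B\<bar> = 2 * \<bar>?A\<bar> * \<bar>?B\<bar>" by (simp add: abs_mult)
          then show ?thesis using h unfolding power2_diff by simp
        qed
        show "\<bar>1 - ?F\<bar> \<le> C" unfolding C_def using \<open>\<bar>?F\<bar> \<le> \<bar>K\<bar>\<close> by linarith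
      qed auto
      finally show ?thesis by (simp add: mult.commute)
    qed
    ultimately have "(2 * ?A * w1 s + 2 * ?B * w2 s) - C * ((?A)\<^sup>2 + (?B)\<^sup>2) \<le> 0"
      by (simp add: algebra_simps) 
    then have "((2 * ?A * w1 s + 2 * ?B * w2 s) * ?E + ((?A)\<^sup>2 + (?B)\<^sup>2) * (?E * (- C))) \<le> 0"
      by (smt (verit) exp_gt_zero mult_nonpos_nonneg left_diff_distrib mult.commute mult.left_commute)
    with d show ?thesis by blast
  qed
  have "G r \<le> 0"
  proof (cases "r = 0")
    case True then show ?thesis using G0 by simp
  next
    case False
    then have "G r \<le> G 0"
      using r by (intro DERIV_nonpos_imp_decreasing_open[where f=G] Gd continuous_on_subset[OF Gc]) auto
    then show ?thesis using G0 by simp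
  qed
  then have "G r = 0" using Gnn[of r] by simp
  then show ?thesis by (simp add: G_def)
qed

end

lemma rolle_real:
  fixes F F' :: "real \<Rightarrow> real"
  assumes ab: "a < b" and eq: "F a = F b" and c: "continuous_on {a..b} F"
    and d: "\<And>x. a < x \<Longrightarrow> x < b \<Longrightarrow> (F has_real_derivative F' x) (at x)"
  shows "\<exists>z. a < z \<and> z < b \<and> F' z = 0"
proof -
  have "\<exists>z. a < z \<and> z < b \<and> (\<lambda>v. F' z * v) = (\<lambda>v. 0)"
    by (rule Rolle_deriv[OF ab eq c]) (use d in \<open>auto simp: has_field_derivative_def\<close>)
  then obtain z where z: "a < z" "z < b" "(\<lambda>v. F' z * v) = (\<lambda>v. 0)" by blast
  from fun_cong[OF z(3), of 1] have "F' z = 0" by simp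
  with z show ?thesis by blast
qed

context fuw
begin

lemma V_neg:
  assumes xi: "0 < \<xi>" "\<xi> < 1" and w10: "w1 0 = 0" and pos: "\<And>r. r \<in> {0<..<\<xi>} \<Longrightarrow> w r > 0"
  shows "w1 \<xi> < 0"
proof -
  have "\<xi> * w1 \<xi> < 0 * w1 0"
  proof (rule DERIV_neg_imp_decreasing_open[where f="\<lambda>r. r * w1 r"])
    fix x assume x: "0 < x" "x < \<xi>"
    then have x1: "x \<in> {0<..<1}" using xi by simp
    have "((\<lambda>r. r * w1 r) has_real_derivative (x * w2 x + 1 * w1 x)) (at x)"
      by (rule DERIV_mult'[OF DERIV_ident w1_at[OF x1]])
    moreover have "x * w2 x + 1 * w1 x = - (x * f1 (u x) * w x)"
      using x1 by (simp add: w2_eq field_simps)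
    moreover have "x * f1 (u x) * w x > 0"
      using x x1 pos[of x] f1_pos[of "u x"] u_pos[of x] by simp
    ultimately show "\<exists>y. ((\<lambda>r. r * w1 r) has_real_derivative y) (at x) \<and> y < 0"
      by (intro exI[where x="x * w2 x + 1 * w1 x"]) simp
  next
    show "continuous_on {0..\<xi>} (\<lambda>r. r * w1 r)"
      using xi by (intro continuous_intros continuous_on_subset[OF w1_cont]) auto
  qed (use xi in simp)
  then show ?thesis using xi w10 by (simp add: mult_less_0_iff)
qed

lemma fu_at': "r \<in> {0<..<1} \<Longrightarrow> D = f1 (u r) * u1 r \<Longrightarrow> ((\<lambda>r. f (u r)) has_real_derivative D) (at r)"
  using fu_at by simp

lemma W_at:
  assumes r: "r \<in> {0<..<1}"
  shows "((\<lambda>r. - (r * r * f (u r) * w r) - r * (r * u1 r + c) * w1 r) has_real_derivative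
           r * w r * (c * f1 (u r) - 2 * f (u r))) (at r)"
proof -
  have rp: "r > 0" using r by simp
  show ?thesis
    apply (rule DERIV_cong)
     apply (rule derivative_eq_intros fu_at'[OF r] u_at[OF r] u1_at[OF r] w_at[OF r] w1_at[OF r] refl)+
    using rp apply (simp add: u2_eq[OF r] w2_eq[OF r] field_simps)
    done
qed

lemma interval:
  assumes a0: "0 \<le> a" and ab: "a < b" and b1: "b \<le> 1" and wa: "w a = 0" and wb: "w b = 0"
    and pos: "\<And>r. r \<in> {a<..<b} \<Longrightarrow> w r > 0"
    and hpos: "\<And>r. r \<in> {a<..<b} \<Longrightarrow> c * f1 (u r) - 2 * f (u r) > 0"
    and ya: "a * u1 a + c \<le> 0" and yb: "b * u1 b + c \<le> 0"
  shows False
proof -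
  define W where "W = (\<lambda>r. - (r * r * f (u r) * w r) - r * (r * u1 r + c) * w1 r)"
  have sub: "{a..b} \<subseteq> {0..1}" using a0 b1 by auto
  have cw: "continuous_on {a..b} w" by (rule continuous_on_subset[OF w_cont sub])
  have cw1: "continuous_on {a..b} w1" by (rule continuous_on_subset[OF w1_cont sub])
  have cu1: "continuous_on {a..b} u1" by (rule continuous_on_subset[OF u1_cont sub])
  have cfu: "continuous_on {a..b} (\<lambda>r. f (u r))" by (rule continuous_on_subset[OF fu_cont sub])
  have "W a < W b"
  proof (rule DERIV_pos_imp_increasing_open[where f=W, OF ab])
    fix x assume ax: "a < x" and xb: "x < b"
    then have x: "x \<in> {0<..<1}" using a0 b1 by auto
    have "x * w x * (c * f1 (u x) - 2 * f (u x)) > 0"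
      using x pos[of x] hpos[of x] ax xb by simp
    then show "\<exists>y. (W has_real_derivative y) (at x) \<and> y > 0"
      using W_at[OF x, of c] unfolding W_def by blast
  next
    show "continuous_on {a..b} W"
      unfolding W_def by (intro continuous_intros cw cw1 cu1 cfu)
  qed
  have w1a: "w1 a \<ge> 0"
  proof (rule ccontr)
    assume "\<not> ?thesis" then have "w1 a < 0" by simp
    from has_real_derivative_neg_dec_right[OF w_d1[of a] this] a0 ab b1
    obtain d where d: "d > 0" "\<And>h. h > 0 \<Longrightarrow> a + h \<in> {0..1} \<Longrightarrow> h < d \<Longrightarrow> w a > w (a + h)"
      by auto
    define h where "h = min (d/2) ((b-a)/2)"
    have h1: "h \<le> d/2" "h \<le> (b-a)/2" unfolding h_def by (rule min.cobounded1, rule min.cobounded2)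
    have h0: "h > 0" "h < d" "h \<le> (b-a)/2" using d(1) ab h1 unfolding h_def by auto
    then have h: "h > 0" "h < d" "a + h < b" using ab h0 by (auto simp: field_simps)
    then have "w a > w (a + h)" using d a0 b1 by auto
    moreover have "w (a + h) > 0" using pos[of "a+h"] h by auto
    ultimately show False using wa by simp
  qed
  have w1b: "w1 b \<le> 0"
  proof (rule ccontr)
    assume "\<not> ?thesis" then have "w1 b > 0" by simp
    from has_real_derivative_pos_inc_left[OF w_d1[of b] this] a0 ab b1
    obtain d where d: "d > 0" "\<And>h. h > 0 \<Longrightarrow> b - h \<in> {0..1} \<Longrightarrow> h < d \<Longrightarrow> w (b - h) < w b"
      by auto
    define h where "h = min (d/2) ((b-a)/2)"
    have h1: "h \<le> d/2" "h \<le> (b-a)/2" unfolding h_def by (rule min.cobounded1, rule min.cobounded2)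
    have h0: "h > 0" "h < d" "h \<le> (b-a)/2" using d(1) ab h1 unfolding h_def by auto
    then have h: "h > 0" "h < d" "a < b - h" using ab h0 by (auto simp: field_simps)
    then have "w (b - h) < w b" using d a0 b1 by auto
    moreover have "w (b - h) > 0" using pos[of "b-h"] h by auto
    ultimately show False using wb by simp
  qed
  have "W a = a * (- (a * u1 a + c)) * w1 a" by (simp add: W_def wa algebra_simps)
  also have "\<dots> \<ge> 0" using a0 ya w1a by simp
  finally have Wa: "W a \<ge> 0" .
  have "W b = b * (- (b * u1 b + c)) * w1 b" by (simp add: W_def wb algebra_simps)
  also have "\<dots> \<le> 0" using a0 ab yb w1b by (simp add: mult_nonneg_nonpos)
  finally have Wb: "W b \<le> 0" .
  show False using Wa Wb \<open>W a < W b\<close> by simp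
qed

lemma main:
  assumes xi: "0 < \<xi>" "\<xi> < 1" and wxi: "w \<xi> = 0" and w10: "w1 0 = 0" and w1z: "w 1 = 0"
    and pos: "\<And>r. r \<in> {0..<\<xi>} \<Longrightarrow> w r > 0"
  shows False
proof -
  define c where "c = - (\<xi> * u1 \<xi>)"
  define W where "W = (\<lambda>r. - (r * r * f (u r) * w r) - r * (r * u1 r + c) * w1 r)"
  have sub: "{0..\<xi>} \<subseteq> {0..1}" using xi by auto
  have cw: "continuous_on {0..\<xi>} w" by (rule continuous_on_subset[OF w_cont sub])
  have cw1: "continuous_on {0..\<xi>} w1" by (rule continuous_on_subset[OF w1_cont sub])
  have cu1: "continuous_on {0..\<xi>} u1" by (rule continuous_on_subset[OF u1_cont sub])
  have cfu: "continuous_on {0..\<xi>} (\<lambda>r. f (u r))" by (rule continuous_on_subset[OF fu_cont sub])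
  have "\<exists>z. 0 < z \<and> z < \<xi> \<and> z * w z * (c * f1 (u z) - 2 * f (u z)) = 0"
  proof (rule rolle_real[where F=W])
    show "W 0 = W \<xi>" by (simp add: W_def wxi c_def)
    show "continuous_on {0..\<xi>} W"
      unfolding W_def by (intro continuous_intros cw cw1 cu1 cfu)
    fix x assume "0 < x" "x < \<xi>"
    then have x: "x \<in> {0<..<1}" using xi by auto
    show "(W has_real_derivative x * w x * (c * f1 (u x) - 2 * f (u x))) (at x)"
      using W_at[OF x, of c] unfolding W_def .
  qed (use xi in simp)
  then obtain r1 where r1: "0 < r1" "r1 < \<xi>" "r1 * w r1 * (c * f1 (u r1) - 2 * f (u r1)) = 0"
    by blast
  have "w r1 > 0" using pos[of r1] r1 by simp
  then have h1: "c * f1 (u r1) = 2 * f (u r1)" using r1 by simp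
  have ur1: "u r1 > 0" using u_pos[of r1] r1 xi by simp
  have f1r1: "f1 (u r1) > 0" using f1_pos[OF ur1] .
  have hpos: "c * f1 (u r) - 2 * f (u r) > 0" if r: "r1 < r" "r < 1" for r
  proof -
    have ur: "u r < u r1" using u_dec[of r1 r] r r1 by simp
    have ur0: "u r > 0" using u_pos[of r] r r1 by simp
    have f1r: "f1 (u r) > 0" using f1_pos[OF ur0] .
    have "f (u r) / f1 (u r) < f (u r1) / f1 (u r1)" by (rule g_inc[OF ur0 ur])
    also have "\<dots> = c / 2" using h1 f1r1 by (simp add: field_simps)
    finally have "f (u r) < c / 2 * f1 (u r)" using f1r by (simp add: field_simps)
    then show ?thesis by simp
  qed
  have w1xi: "w1 \<xi> < 0" by (rule V_neg[OF xi w10]) (use pos in auto)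
  from has_real_derivative_neg_dec_right[OF w_d1[of \<xi>] w1xi] xi
  obtain d where d: "d > 0" "\<And>h. h > 0 \<Longrightarrow> \<xi> + h \<in> {0..1} \<Longrightarrow> h < d \<Longrightarrow> w \<xi> > w (\<xi> + h)"
    by auto
  define h where "h = min (d/2) ((1-\<xi>)/2)"
  have h1': "h \<le> d/2" "h \<le> (1-\<xi>)/2" unfolding h_def by (rule min.cobounded1, rule min.cobounded2)
  have h0: "h > 0" using d(1) xi unfolding h_def by auto
  define t where "t = \<xi> + h"
  have t: "\<xi> < t" "t < 1" using h0 h1' xi by (auto simp: t_def field_simps)
  have wt: "w t < 0" using d(2)[of h] h0 h1' t wxi xi by (auto simp: t_def)
  define K1 where "K1 = {s \<in> {\<xi>..t}. w s = 0}"
  have "closed K1" unfolding K1_def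
    by (intro continuous_closed_preimage_constant continuous_on_subset[OF w_cont]) (use xi t in auto)
  moreover have "bounded K1" unfolding K1_def by (rule bounded_subset[OF bounded_closed_interval]) auto
  ultimately have "compact K1" by (simp add: compact_eq_bounded_closed)
  moreover have "\<xi> \<in> K1" using t wxi by (simp add: K1_def)
  ultimately obtain a where a: "a \<in> K1" "\<And>s. s \<in> K1 \<Longrightarrow> s \<le> a"
    using compact_attains_sup[of K1] by blast
  have a1: "\<xi> \<le> a" "a \<le> t" "w a = 0" using a(1) by (auto simp: K1_def)
  have at: "a < t" using a1 wt by (cases "a = t") auto
  have a2: "w s \<noteq> 0" if "a < s" "s \<le> t" for s using a(2)[of s] that a1 by (force simp: K1_def)
  define K2 where "K2 = {s \<in> {t..1}. w s = 0}"
  have "closed K2" unfolding K2_def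
    by (intro continuous_closed_preimage_constant continuous_on_subset[OF w_cont]) (use xi t in auto)
  moreover have "bounded K2" unfolding K2_def by (rule bounded_subset[OF bounded_closed_interval]) auto
  ultimately have "compact K2" by (simp add: compact_eq_bounded_closed)
  moreover have "1 \<in> K2" using t w1z by (simp add: K2_def)
  ultimately obtain b where b: "b \<in> K2" "\<And>s. s \<in> K2 \<Longrightarrow> b \<le> s"
    using compact_attains_inf[of K2] by blast
  have b1: "t \<le> b" "b \<le> 1" "w b = 0" using b(1) by (auto simp: K2_def)
  have tb: "t < b" using b1 wt by (cases "b = t") auto
  have b2: "w s \<noteq> 0" if "t \<le> s" "s < b" for s using b(2)[of s] that b1 by (force simp: K2_def)
  have nz: "w s \<noteq> 0" if "a < s" "s < b" for s
    using a2[of s] b2[of s] that by (cases "s \<le> t") auto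
  have wneg: "w s < 0" if s: "a < s" "s < b" for s
  proof (rule ccontr)
    assume "\<not> w s < 0"
    then have ws: "w s > 0" using nz[OF s] by simp
    have "s \<noteq> t" using ws wt by auto
    then consider "s < t" | "t < s" by linarith
    then obtain x where x: "min s t \<le> x" "x \<le> max s t" "w x = 0"
    proof cases
      case 1
      have "continuous_on {s..t} w" by (rule continuous_on_subset[OF w_cont]) (use s a1 xi t in auto)
      from IVT2'[of w t 0 s, OF _ _ _ this] 1 ws wt obtain x where "s \<le> x" "x \<le> t" "w x = 0" by auto
      then show ?thesis using that 1 by auto
    next
      case 2
      have "continuous_on {t..s} w" by (rule continuous_on_subset[OF w_cont]) (use s b1 xi t in auto)
      from IVT'[of w t 0 s, OF _ _ _ this] 2 ws wt obtain x where "t \<le> x" "x \<le> s" "w x = 0" by auto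
      then show ?thesis using that 2 by auto
    qed
    have "a < x" "x < b" using x s at tb by auto
    then show False using nz x(3) by auto
  qed
  interpret N: fuw f f1 f2 u u1 u2 "\<lambda>r. - w r" "\<lambda>r. - w1 r" "\<lambda>r. - w2 r" by (rule neg)
  have ya: "a * u1 a + c \<le> 0"
  proof (cases "a = \<xi>")
    case True then show ?thesis by (simp add: c_def)
  next
    case False then have "a * u1 a < \<xi> * u1 \<xi>" using T_dec[of \<xi> a] a1 xi t by simp
    then show ?thesis by (simp add: c_def)
  qed
  have yb: "b * u1 b + c \<le> 0"
    using T_dec[of \<xi> b] a1 at tb b1 xi by (simp add: c_def)
  show False
  proof (rule N.interval[of a b c])
    show "0 \<le> a" using a1 xi by simp
    show "a < b" using at tb by simp
    show "b \<le> 1" using b1 by simp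
    show "- w a = 0" using a1 by simp
    show "- w b = 0" using b1 by simp
    fix r assume r: "r \<in> {a<..<b}"
    then show "- w r > 0" using wneg[of r] by simp
    show "c * f1 (u r) - 2 * f (u r) > 0" using hpos[of r] r r1 a1 b1 by auto
  qed (use ya yb in auto)
qed

lemma sgn:
  assumes x: "x \<in> {0..1}" and w0: "w 0 > 0" and nz: "\<And>s. s \<in> {0..x} \<Longrightarrow> w s \<noteq> 0"
  shows "w x > 0"
proof (rule ccontr)
  assume "\<not> w x > 0"
  then have wx: "w x \<le> 0" by simp
  have "continuous_on {0..x} w" by (rule continuous_on_subset[OF w_cont]) (use x in auto)
  from IVT2'[of w x 0 0, OF wx _ _ this] w0 x obtain z where "0 \<le> z" "z \<le> x" "w z = 0" by auto
  then show False using nz[of z] by auto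
qed

end

theorem theorem3p1:
  fixes f f1 f2 :: "real \<Rightarrow> real"
    and u u1 u2 w w1 w2 :: "real \<Rightarrow> real"
  assumes f_d1: "\<And>x. x \<ge> 0 \<Longrightarrow> (f has_real_derivative f1 x) (at x within {0..})"
    and f_d2: "\<And>x. x \<ge> 0 \<Longrightarrow> (f1 has_real_derivative f2 x) (at x within {0..})"
    and f_C2: "continuous_on {0..} f2"
    and f_pos: "\<And>x. x > 0 \<Longrightarrow> f x > 0"
    and f1_pos: "\<And>x. x > 0 \<Longrightarrow> f1 x > 0"
    and f_logconc: "\<And>x. x > 0 \<Longrightarrow> f2 x * f x - (f1 x)\<^sup>2 < 0"
    and u_d1: "\<And>r. r \<in> {0..1} \<Longrightarrow> (u has_real_derivative u1 r) (at r within {0..1})"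
    and u_d2: "\<And>r. r \<in> {0..1} \<Longrightarrow> (u1 has_real_derivative u2 r) (at r within {0..1})"
    and u_C2: "continuous_on {0..1} u2"
    and u_eq: "\<And>r. r \<in> {0<..<1} \<Longrightarrow> u2 r + u1 r / r + f (u r) = 0"
    and u_bc: "u1 0 = 0" "u 1 = 0"
    and u_pos: "\<And>r. r \<in> {0..<1} \<Longrightarrow> u r > 0"
    and w_d1: "\<And>r. r \<in> {0..1} \<Longrightarrow> (w has_real_derivative w1 r) (at r within {0..1})"
    and w_d2: "\<And>r. r \<in> {0..1} \<Longrightarrow> (w1 has_real_derivative w2 r) (at r within {0..1})"
    and w_C2: "continuous_on {0..1} w2"
    and w_eq: "\<And>r. r \<in> {0<..<1} \<Longrightarrow> w2 r + w1 r / r + f1 (u r) * w r = 0"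
    and w_bc: "w1 0 = 0" "w 1 = 0"
    and w_nontriv: "\<exists>r\<in>{0..1}. w r \<noteq> 0"
  shows "(\<forall>r\<in>{0..<1}. w r > 0) \<or> (\<forall>r\<in>{0..<1}. w r < 0)"
proof -
  interpret P: fuw f f1 f2 u u1 u2 w w1 w2
    apply (intro fuw.intro fu.intro fuw_axioms.intro)
    using f_d1 f_d2 f_pos f1_pos f_logconc u_d1 u_d2 u_eq u_bc u_pos w_d1 w_d2 w_eq by auto
  interpret N: fuw f f1 f2 u u1 u2 "\<lambda>r. - w r" "\<lambda>r. - w1 r" "\<lambda>r. - w2 r" by (rule P.neg)
  show ?thesis
  proof (cases "w 0 = 0")
    case True
    then have "\<forall>r\<in>{0..1}. w r = 0" using P.energy[OF True w_bc(1)] by blast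
    then show ?thesis using w_nontriv by blast
  next
    case w0: False
    show ?thesis
    proof (cases "\<exists>z\<in>{0<..<1}. w z = 0")
      case True
      then obtain z where z: "0 < z" "z < 1" "w z = 0" by auto
      define K where "K = {s \<in> {0..z}. w s = 0}"
      have "closed K" unfolding K_def
        by (intro continuous_closed_preimage_constant continuous_on_subset[OF P.w_cont]) (use z in auto)
      moreover have "bounded K" unfolding K_def by (rule bounded_subset[OF bounded_closed_interval]) auto
      ultimately have "compact K" by (simp add: compact_eq_bounded_closed)
      moreover have "z \<in> K" using z by (simp add: K_def)
      ultimately obtain \<xi> where xi: "\<xi> \<in> K" "\<And>s. s \<in> K \<Longrightarrow> \<xi> \<le> s"
        using compact_attains_inf[of K] by blast
      have xi1: "0 \<le> \<xi>" "\<xi> \<le> z" "w \<xi> = 0" using xi(1) by (auto simp: K_def)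
      have xi0: "0 < \<xi>" using xi1 w0 by (cases "\<xi> = 0") auto
      have xi2: "\<xi> < 1" using xi1 z by simp
      have nz: "w s \<noteq> 0" if "s \<in> {0..<\<xi>}" for s using xi(2)[of s] that xi1 by (force simp: K_def)
      show ?thesis
      proof (cases "w 0 > 0")
        case True
        have "w r > 0" if "r \<in> {0..<\<xi>}" for r
          using P.sgn[of r] True nz that xi2 by auto
        then have False using P.main[OF xi0 xi2 xi1(3) w_bc(1) w_bc(2)] by blast
        then show ?thesis ..
      next
        case False
        then have n0: "- w 0 > 0" using w0 by simp
        have "- w r > 0" if "r \<in> {0..<\<xi>}" for r
          using N.sgn[of r] n0 nz that xi2 by auto
        then have False using N.main[OF xi0 xi2] xi1(3) w_bc by auto
        then show ?thesis ..
      qed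
    next
      case False
      then have nz: "w s \<noteq> 0" if "s \<in> {0..<1}" for s using that w0 by (cases "s = 0") auto
      show ?thesis
      proof (cases "w 0 > 0")
        case True
        have "w r > 0" if "r \<in> {0..<1}" for r
          using P.sgn[of r] True nz that by auto
        then show ?thesis by blast
      next
        case False
        then have n0: "- w 0 > 0" using w0 by simp
        have "- w r > 0" if "r \<in> {0..<1}" for r
          using N.sgn[of r] n0 nz that by auto
        then show ?thesis by auto
      qed
    qed
  qed
qed

end
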